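(* Let $X$ be a Lindelöf $P$-space. Then $C_p(X)$ has a bounded resolution if and only if $X$ is countable and discrete.
   Context: A $P$-space is a Tychonoff space in which every countable intersection of open sets is open. $C_p(X)$ is the space of continuous real-valued functions on $X$ with the pointwise topology. Order $\mathbb{N}^{\mathbb{N}}$ pointwise. A bounded resolution of a locally convex space $F$ is a family $\{B_\alpha:\alpha\in\mathbb{N}^{\mathbb{N}}\}$ of bounded subsets covering $F$ with $B_\alpha\subseteq B_\beta$ whenever $\alpha\le\beta$. *)

theory Defs
  imports "HOL-Analysis.Analysis"
begin

definition Tychonoff_space :: "'a topology \<Rightarrow> bool" where
  "Tychonoff_space X \<longleftrightarrow> completely_regular_space X \<and> Hausdorff_space X"

definition P_space :: "'a topology \<Rightarrow> bool" where
  "P_space X \<longleftrightarrow> Tychonoff_space X \<and>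
     (\<forall>\<U>. countable \<U> \<and> \<U> \<noteq> {} \<and> (\<forall>U\<in>\<U>. openin X U) \<longrightarrow> openin X (\<Inter>\<U>))"

definition Cp_carrier :: "'a topology \<Rightarrow> ('a \<Rightarrow> real) set" where
  "Cp_carrier X = {f. continuous_map X euclideanreal f \<and> f \<in> extensional (topspace X)}"

definition Cp_topology :: "'a topology \<Rightarrow> ('a \<Rightarrow> real) topology" where
  "Cp_topology X = subtopology (product_topology (\<lambda>_. euclideanreal) (topspace X)) (Cp_carrier X)"

definition Cp_zero :: "'a topology \<Rightarrow> 'a \<Rightarrow> real" where
  "Cp_zero X = (\<lambda>x\<in>topspace X. 0)"

definition Cp_scale :: "'a topology \<Rightarrow> real \<Rightarrow> ('a \<Rightarrow> real) \<Rightarrow> 'a \<Rightarrow> real" where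
  "Cp_scale X t g = (\<lambda>x\<in>topspace X. t * g x)"

text \<open>Bounded subset of the topological vector space C_p(X): absorbed by every
  neighbourhood of 0 (E \<subseteq> t V for all sufficiently large t).\<close>
definition Cp_bounded :: "'a topology \<Rightarrow> ('a \<Rightarrow> real) set \<Rightarrow> bool" where
  "Cp_bounded X B \<longleftrightarrow> B \<subseteq> Cp_carrier X \<and>
     (\<forall>V. (\<exists>W. openin (Cp_topology X) W \<and> Cp_zero X \<in> W \<and> W \<subseteq> V) \<and> V \<subseteq> Cp_carrier X \<longrightarrow>
        (\<exists>s>0. \<forall>t>s. B \<subseteq> Cp_scale X t ` V))"

definition has_bounded_resolution :: "'a topology \<Rightarrow> bool" where
  "has_bounded_resolution X \<longleftrightarrow>
     (\<exists>B :: (nat \<Rightarrow> nat) \<Rightarrow> ('a \<Rightarrow> real) set.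
        (\<forall>\<alpha>. Cp_bounded X (B \<alpha>)) \<and>
        (\<Union>\<alpha>. B \<alpha>) = Cp_carrier X \<and>
        (\<forall>\<alpha> \<beta>. \<alpha> \<le> \<beta> \<longrightarrow> B \<alpha> \<subseteq> B \<beta>))"

end

theory Submission
  imports Defs
begin


lemma P_open_Inter:
  assumes "P_space X" "countable U" "\<forall>u\<in>U. openin X u"
  shows "openin X (topspace X \<inter> \<Inter>U)"
proof -
  have "openin X (\<Inter>(insert (topspace X) U))" using assms unfolding P_space_def by auto
  thus ?thesis by simp
qed

lemma P_zero_open:
  assumes P: "P_space X" and f: "continuous_map X euclideanreal f"
  shows "openin X {x\<in>topspace X. f x = 0}"
proof -
  let ?U = "range (\<lambda>n::nat. {x\<in>topspace X. f x \<in> {- inverse (real (Suc n))<..<inverse (real (Suc n))}})"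
  have o1: "\<And>n::nat. openin X {x\<in>topspace X. f x \<in> {- inverse (real (Suc n))<..<inverse (real (Suc n))}}"
    by (rule openin_continuous_map_preimage[OF f]) simp
  have o: "\<forall>u\<in>?U. openin X u"
    using o1 by blast
  have key: "f x = 0" if h: "\<forall>n. - inverse (real (Suc n)) < f x \<and> f x < inverse (real (Suc n))" for x
  proof (rule ccontr)
    assume "f x \<noteq> 0"
    then have "0 < \<bar>f x\<bar>" by simp
    then obtain n where "inverse (real (Suc n)) < \<bar>f x\<bar>" using reals_Archimedean by blast
    with h[rule_format, of n] show False by linarith
  qed
  have eq: "topspace X \<inter> \<Inter>?U = {x\<in>topspace X. f x = 0}"
    using key by auto
  show ?thesis using P_open_Inter[OF P _ o] eq by simp
qed

lemma P_sep:
  assumes P: "P_space X" and a: "a \<in> topspace X" and b: "b \<in> topspace X" and ab: "a \<noteq> b"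
  shows "\<exists>Z. openin X Z \<and> closedin X Z \<and> a \<in> Z \<and> b \<notin> Z"
proof -
  have T: "Tychonoff_space X" using P unfolding P_space_def by auto
  then have cr: "completely_regular_space X" and H: "Hausdorff_space X" unfolding Tychonoff_space_def by auto
  have cb: "closedin X {b}" by (rule closedin_t1_singleton[OF Hausdorff_imp_t1_space[OF H] b])
  have pre: "closedin X {b} \<and> a \<in> topspace X - {b}" using cb a ab by blast
  from cr[unfolded completely_regular_space_def, rule_format, OF pre]
  obtain f where f0: "continuous_map X (top_of_set {0..1::real}) f \<and> f a = 0 \<and> f ` {b} \<subseteq> {1}"
    by (elim exE) (erule that)
  from f0 have f: "continuous_map X (top_of_set {0..1::real}) f" "f a = 0" "f ` {b} \<subseteq> {1}" by auto
  have fc: "continuous_map X euclideanreal f" using f(1) continuous_map_in_subtopology by blast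
  have fb: "f b = 1" using f(3) by simp
  let ?Z = "{x\<in>topspace X. f x = 0}"
  have o: "openin X ?Z" by (rule P_zero_open[OF P fc])
  have c: "closedin X ?Z"
    using closedin_continuous_map_preimage[OF fc, of "{0}"] by simp
  have "a \<in> ?Z" using f(2) a by simp
  moreover have "b \<notin> ?Z" using fb by simp
  ultimately show ?thesis using o c by blast
qed

lemma P_isolate:
  assumes P: "P_space X" and D: "countable D" "D \<subseteq> topspace X" and d: "d \<in> D"
  shows "\<exists>Z. openin X Z \<and> closedin X Z \<and> Z \<inter> D = {d}"
proof -
  have "\<forall>b\<in>D-{d}. \<exists>Z. openin X Z \<and> closedin X Z \<and> d \<in> Z \<and> b \<notin> Z"
    using P_sep[OF P] D d by blast
  then obtain Q where Q: "\<forall>b\<in>D-{d}. openin X (Q b) \<and> closedin X (Q b) \<and> d \<in> Q b \<and> b \<notin> Q b"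
    by metis
  let ?Z = "topspace X \<inter> \<Inter>(Q ` (D-{d}))"
  have "openin X ?Z" using P_open_Inter[OF P, of "Q ` (D-{d})"] Q D by auto
  moreover have "closedin X (\<Inter>(insert (topspace X) (Q ` (D-{d}))))"
    using Q by (intro closedin_Inter) auto
  moreover have "?Z \<inter> D = {d}" using Q D d by auto
  ultimately show ?thesis by (intro exI[of _ ?Z]) auto
qed

lemma lc_cont:
  assumes lc: "\<And>x. x\<in>topspace X \<Longrightarrow> \<exists>T. openin X T \<and> x\<in>T \<and> (\<forall>z\<in>T. h z = h x)"
  shows "continuous_map X euclideanreal h"
proof -
  have "openin X {x \<in> topspace X. h x \<in> U}" for U :: "real set"
  proof -
    have "\<exists>T. openin X T \<and> x \<in> T \<and> T \<subseteq> {x \<in> topspace X. h x \<in> U}"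
      if x: "x \<in> {x \<in> topspace X. h x \<in> U}" for x
    proof -
      from x have xs: "x \<in> topspace X" and hx: "h x \<in> U" by auto
      obtain T where T: "openin X T" "x\<in>T" "\<forall>z\<in>T. h z = h x" using lc[OF xs] by (elim exE conjE)
      have "T \<subseteq> topspace X" by (rule openin_subset[OF T(1)])
      then have "T \<subseteq> {x \<in> topspace X. h x \<in> U}" using T(3) hx by auto
      then show ?thesis using T(1,2) by blast
    qed
    then show ?thesis by (subst openin_subopen) blast
  qed
  then show ?thesis by (simp add: continuous_map_def)
qed

lemma Cp_zero_in: "Cp_zero X \<in> Cp_carrier X"
proof -
  have "continuous_map X euclideanreal (Cp_zero X)"
    unfolding Cp_zero_def by (rule continuous_map_eq[of _ _ "\<lambda>x. 0"]) auto
  thus ?thesis unfolding Cp_carrier_def Cp_zero_def by auto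
qed

lemma P_extend:
  assumes P: "P_space X" and D: "countable D" "D \<subseteq> topspace X"
  shows "\<exists>h\<in>Cp_carrier X. \<forall>d\<in>D. h d = L d"
proof (cases "D = {}")
  case True thus ?thesis using Cp_zero_in by blast
next
  case False
  define e where "e = from_nat_into D"
  have eD: "\<And>n. e n \<in> D" using False by (simp add: e_def from_nat_into)
  have De: "\<exists>n. e n = d" if "d \<in> D" for d
  proof -
    have "e (to_nat_on D d) = d" using D(1) that by (simp add: e_def)
    then show ?thesis by blast
  qed
  have "\<forall>n. \<exists>Z. openin X Z \<and> closedin X Z \<and> Z \<inter> D = {e n}"
  proof
    fix n show "\<exists>Z. openin X Z \<and> closedin X Z \<and> Z \<inter> D = {e n}" by (rule P_isolate[OF P D eD])
  qed
  from choice[OF this] obtain Z where Z0: "\<forall>n. openin X (Z n) \<and> closedin X (Z n) \<and> Z n \<inter> D = {e n}"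
    by (elim exE) (erule that)
  from Z0 have Z: "\<And>n. openin X (Z n)" "\<And>n. closedin X (Z n)" "\<And>n. Z n \<inter> D = {e n}" by auto
  define h where "h = restrict (\<lambda>x. if \<exists>n. x \<in> Z n then L (e (LEAST n. x \<in> Z n)) else 0) (topspace X)"
  have hD: "h d = L d" if d: "d \<in> D" for d
  proof -
    obtain n where n: "e n = d" using De d by blast
    have ex: "\<exists>n. d \<in> Z n" using Z(3)[of n] n by auto
    let ?m = "LEAST n. d \<in> Z n"
    have "d \<in> Z ?m" using ex by (rule LeastI_ex)
    then have "e ?m = d" using Z(3)[of ?m] d by (metis IntI singletonD)
    then show ?thesis using ex d D(2) by (auto simp: h_def)
  qed
  have lc: "\<exists>T. openin X T \<and> x\<in>T \<and> (\<forall>z\<in>T. h z = h x)" if x: "x \<in> topspace X" for x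
  proof (cases "\<exists>n. x \<in> Z n")
    case True
    define m where "m = (LEAST n. x \<in> Z n)"
    define T where "T = Z m - \<Union> (Z ` {..<m})"
    have cU: "closedin X (\<Union> (Z ` {..<m}))" by (rule closedin_Union) (use Z(2) in auto)
    have oT: "openin X T" unfolding T_def by (rule openin_diff[OF Z(1) cU])
    have xm: "x \<in> Z m" unfolding m_def by (rule LeastI_ex[OF True])
    have xk: "x \<notin> Z k" if "k < m" for k using not_less_Least[of k "\<lambda>n. x \<in> Z n"] that m_def by blast
    have xT: "x \<in> T" unfolding T_def using xm xk by blast
    have hx: "h x = L (e m)" using x True by (simp add: h_def m_def)
    have hz: "h z = h x" if z: "z \<in> T" for z
    proof -
      have zs: "z \<in> topspace X" using z openin_subset[OF oT] by blast
      have zm: "z \<in> Z m" using z unfolding T_def by blast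
      have zk: "z \<notin> Z k" if "k < m" for k using z that unfolding T_def by blast
      have lm: "(LEAST n. z \<in> Z n) = m"
      proof (rule Least_equality)
        show "z \<in> Z m" by (rule zm)
        fix y assume "z \<in> Z y"
        then show "m \<le> y" using zk not_le by blast
      qed
      have ez: "\<exists>n. z \<in> Z n" using zm by blast
      have "h z = L (e m)" using zs ez lm by (simp add: h_def)
      then show ?thesis using hx by simp
    qed
    show ?thesis using oT xT hz by blast
  next
    case False
    define T where "T = topspace X \<inter> \<Inter> (range (\<lambda>n. topspace X - Z n))"
    have oi: "\<forall>u\<in>range (\<lambda>n. topspace X - Z n). openin X u"
    proof
      fix u assume "u \<in> range (\<lambda>n. topspace X - Z n)"
      then obtain n where "u = topspace X - Z n" by blast
      then show "openin X u" using openin_diff[OF openin_topspace Z(2)] by simp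
    qed
    have oT: "openin X T" unfolding T_def by (rule P_open_Inter[OF P _ oi]) simp
    have xT: "x \<in> T" using False x unfolding T_def by blast
    have hx: "h x = 0" using x False by (simp add: h_def)
    have hz: "h z = h x" if z: "z \<in> T" for z
    proof -
      have zs: "z \<in> topspace X" using z unfolding T_def by blast
      have "\<not> (\<exists>n. z \<in> Z n)" using z unfolding T_def by blast
      then have "h z = 0" using zs by (simp add: h_def)
      then show ?thesis using hx by simp
    qed
    show ?thesis using oT xT hz by blast
  qed
  have "continuous_map X euclideanreal h" by (rule lc_cont) (rule lc)
  moreover have "h \<in> extensional (topspace X)" by (simp add: h_def)
  ultimately show ?thesis using hD unfolding Cp_carrier_def by blast
qed

lemma Cp_bounded_pt:
  assumes B: "Cp_bounded X B" and y: "y \<in> topspace X"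
  shows "\<exists>M. \<forall>f\<in>B. \<bar>f y\<bar> \<le> M"
proof -
  define V where "V = {f \<in> Cp_carrier X. f y \<in> {-1<..<1::real}}"
  let ?P = "product_topology (\<lambda>_. euclideanreal) (topspace X)"
  have sub: "Cp_carrier X \<subseteq> topspace ?P" unfolding Cp_carrier_def by (auto simp: PiE_def)
  have o1: "openin ?P {f \<in> topspace ?P. f y \<in> {-1<..<1::real}}"
    by (rule openin_continuous_map_preimage[OF continuous_map_product_projection[OF y]]) simp
  have eqV: "V = {f \<in> topspace ?P. f y \<in> {-1<..<1::real}} \<inter> Cp_carrier X"
    using sub unfolding V_def by auto
  have oV: "openin (Cp_topology X) V"
    unfolding Cp_topology_def eqV by (rule openin_subtopology_Int[OF o1])
  have "Cp_zero X \<in> V" using Cp_zero_in y by (simp add: V_def Cp_zero_def)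
  moreover have "V \<subseteq> Cp_carrier X" by (auto simp: V_def)
  ultimately obtain s where s: "s>0" "\<forall>t>s. B \<subseteq> Cp_scale X t ` V"
    using B oV unfolding Cp_bounded_def by blast
  have BV: "B \<subseteq> Cp_scale X (s+1) ` V" using s by simp
  have "\<bar>f y\<bar> \<le> s+1" if f: "f \<in> B" for f
  proof -
    obtain v where v: "v \<in> V" "f = Cp_scale X (s+1) v" using BV f by blast
    have fy: "f y = (s+1) * v y" using v(2) y by (simp add: Cp_scale_def)
    have "\<bar>v y\<bar> \<le> 1" using v(1) by (auto simp: V_def)
    have "\<bar>(s+1) * v y\<bar> = (s+1) * \<bar>v y\<bar>" using s(1) by (simp add: abs_mult)
    also have "\<dots> \<le> (s+1) * 1" using s(1) \<open>\<bar>v y\<bar> \<le> 1\<close> by (intro mult_left_mono) auto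
    finally have "\<bar>(s+1) * v y\<bar> \<le> (s+1) * 1" .
    then show ?thesis using fy by simp
  qed
  then show ?thesis by blast
qed

lemma P_countable_discrete:
  assumes P: "P_space X" and c: "countable (topspace X)"
  shows "X = discrete_topology (topspace X)"
proof -
  have H: "Hausdorff_space X" using P unfolding P_space_def Tychonoff_space_def by auto
  have "openin X {x}" if x: "x \<in> topspace X" for x
  proof -
    let ?U = "(\<lambda>b. topspace X - {b}) ` (topspace X - {x})"
    have "openin X (topspace X \<inter> \<Inter>?U)"
      using c closedin_t1_singleton[OF Hausdorff_imp_t1_space[OF H]]
      by (intro P_open_Inter[OF P]) (auto intro: openin_diff)
    moreover have "topspace X \<inter> \<Inter>?U = {x}" using x by auto
    ultimately show ?thesis by simp
  qed
  then show ?thesis using discrete_topology_unique[of "topspace X" X] by metis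
qed

lemma countable_resolution:
  assumes c: "countable (topspace X)"
  shows "has_bounded_resolution X"
proof -
  define S where "S = topspace X"
  define B where "B = (\<lambda>\<alpha>::nat\<Rightarrow>nat. {f \<in> Cp_carrier X. \<forall>x\<in>S. \<bar>f x\<bar> \<le> real (\<alpha> (to_nat_on S x))})"
  let ?P = "product_topology (\<lambda>_. euclideanreal) S"
  have bnd: "Cp_bounded X (B \<alpha>)" for \<alpha>
    unfolding Cp_bounded_def
  proof (intro conjI allI impI)
    show "B \<alpha> \<subseteq> Cp_carrier X" by (auto simp: B_def)
    fix V assume asm: "(\<exists>W. openin (Cp_topology X) W \<and> Cp_zero X \<in> W \<and> W \<subseteq> V) \<and> V \<subseteq> Cp_carrier X"
    then obtain W where W: "openin (Cp_topology X) W" "Cp_zero X \<in> W" "W \<subseteq> V" by blast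
    obtain W0 where W0: "openin ?P W0" "W = W0 \<inter> Cp_carrier X"
      using W(1) unfolding Cp_topology_def openin_subtopology S_def by blast
    have z0: "Cp_zero X \<in> W0" using W(2) W0(2) by blast
    obtain U where U: "finite {i \<in> S. U i \<noteq> topspace euclideanreal}" "\<forall>i\<in>S. openin euclideanreal (U i)"
        "Cp_zero X \<in> Pi\<^sub>E S U" "Pi\<^sub>E S U \<subseteq> W0"
      using W0(1) z0 unfolding openin_product_topology_alt by blast
    define F where "F = {i \<in> S. U i \<noteq> UNIV}"
    have fF: "finite F" using U(1) by (simp add: F_def)
    have 0: "0 \<in> U i" if "i \<in> S" for i using U(3) that by (auto simp: Cp_zero_def S_def PiE_def Pi_def)
    have "\<exists>e>0. \<forall>y. \<bar>y\<bar> < e \<longrightarrow> y \<in> U i" if i: "i \<in> S" for i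
    proof -
      have "open (U i)" using U(2) i by simp
      then obtain e where e: "e > 0" "ball 0 e \<subseteq> U i" using 0[OF i] open_contains_ball by blast
      have "\<forall>y. \<bar>y\<bar> < e \<longrightarrow> y \<in> U i" using e(2) by (auto simp: dist_real_def)
      then show ?thesis using e(1) by blast
    qed
    then have "\<forall>i\<in>S. \<exists>e. e > 0 \<and> (\<forall>y. \<bar>y\<bar> < e \<longrightarrow> y \<in> U i)" by blast
    from bchoice[OF this] obtain eps where eps: "\<forall>i\<in>S. eps i > 0 \<and> (\<forall>y. \<bar>y\<bar> < eps i \<longrightarrow> y \<in> U i)"
      by (elim exE) (erule that)
    define a where "a = (\<lambda>i. real (\<alpha> (to_nat_on S i)) / eps i)"
    have a0: "0 \<le> a i" if "i \<in> S" for i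
    proof -
      have "eps i > 0" using eps that by blast
      then show ?thesis unfolding a_def by simp
    qed
    define s where "s = 1 + sum a F"
    have s0: "s > 0" unfolding s_def using a0 sum_nonneg[of F a] F_def by fastforce
    have "B \<alpha> \<subseteq> Cp_scale X t ` V" if t: "t > s" for t
    proof
      fix f assume f: "f \<in> B \<alpha>"
      have fC: "f \<in> Cp_carrier X" and fb: "\<forall>x\<in>S. \<bar>f x\<bar> \<le> real (\<alpha> (to_nat_on S x))"
        using f by (auto simp: B_def)
      have tpos: "t > 0" using t s0 by simp
      define v where "v = Cp_scale X (1/t) f"
      have vC: "v \<in> Cp_carrier X"
      proof -
        have fc: "continuous_map X euclideanreal f" using fC by (simp add: Cp_carrier_def)
        have "continuous_map X euclideanreal (\<lambda>x. (1/t) * f x)" by (rule continuous_map_real_mult_left[OF fc])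
        then have "continuous_map X euclideanreal v"
          by (rule continuous_map_eq) (simp add: v_def Cp_scale_def)
        moreover have "v \<in> extensional (topspace X)" by (simp add: v_def Cp_scale_def)
        ultimately show ?thesis by (simp add: Cp_carrier_def)
      qed
      have vU: "v i \<in> U i" if i: "i \<in> S" for i
      proof (cases "i \<in> F")
        case False
        then show ?thesis using i by (simp add: F_def)
      next
        case True
        have ai: "a i \<le> sum a F" by (rule member_le_sum[OF True _ fF]) (use a0 F_def in auto)
        have ep: "eps i > 0" using eps i by blast
        have "real (\<alpha> (to_nat_on S i)) / eps i < t" using ai t unfolding s_def a_def by linarith
        then have lt: "real (\<alpha> (to_nat_on S i)) < t * eps i" using ep by (simp add: field_simps)
        have "\<bar>f i\<bar> < t * eps i" using fb i lt by fastforce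
        then have "\<bar>f i\<bar> / t < eps i" using tpos by (simp add: field_simps)
        then have "\<bar>(1/t) * f i\<bar> < eps i" using tpos by (simp add: abs_mult)
        then have "(1/t) * f i \<in> U i" using eps i by blast
        then show ?thesis using i by (simp add: v_def Cp_scale_def S_def)
      qed
      have "v \<in> Pi\<^sub>E S U" using vU by (auto simp: v_def Cp_scale_def S_def PiE_def)
      then have "v \<in> W" using U(4) W0(2) vC by blast
      then have vV: "v \<in> V" using W(3) by blast
      have fext: "f \<in> extensional (topspace X)" using fC by (simp add: Cp_carrier_def)
      have "Cp_scale X t v = f"
      proof
        fix x show "Cp_scale X t v x = f x"
        proof (cases "x \<in> topspace X")
          case True then show ?thesis using tpos by (simp add: v_def Cp_scale_def)
        next
          case False then show ?thesis using fext by (simp add: Cp_scale_def extensional_def)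
        qed
      qed
      then show "f \<in> Cp_scale X t ` V" using vV by (metis image_eqI)
    qed
    then show "\<exists>s>0. \<forall>t>s. B \<alpha> \<subseteq> Cp_scale X t ` V" using s0 by blast
  qed
  have cov: "(\<Union>\<alpha>. B \<alpha>) = Cp_carrier X"
  proof
    show "(\<Union>\<alpha>. B \<alpha>) \<subseteq> Cp_carrier X" by (auto simp: B_def)
    show "Cp_carrier X \<subseteq> (\<Union>\<alpha>. B \<alpha>)"
    proof
      fix f assume f: "f \<in> Cp_carrier X"
      define \<alpha> where "\<alpha> = (\<lambda>n. nat \<lceil>\<bar>f (from_nat_into S n)\<bar>\<rceil>)"
      have "\<bar>f x\<bar> \<le> real (\<alpha> (to_nat_on S x))" if x: "x \<in> S" for x
      proof -
        have "from_nat_into S (to_nat_on S x) = x" using c x by (simp add: S_def)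
        then show ?thesis unfolding \<alpha>_def using real_nat_ceiling_ge by simp
      qed
      then have "f \<in> B \<alpha>" using f by (simp add: B_def)
      then show "f \<in> (\<Union>\<alpha>. B \<alpha>)" by blast
    qed
  qed
  have mono: "\<forall>\<alpha> \<beta>. \<alpha> \<le> \<beta> \<longrightarrow> B \<alpha> \<subseteq> B \<beta>"
  proof (intro allI impI subsetI)
    fix \<alpha> \<beta> f assume le: "(\<alpha>::nat\<Rightarrow>nat) \<le> \<beta>" and f: "f \<in> B \<alpha>"
    have "\<bar>f x\<bar> \<le> real (\<beta> (to_nat_on S x))" if x: "x \<in> S" for x
    proof -
      have "\<alpha> (to_nat_on S x) \<le> \<beta> (to_nat_on S x)" using le by (simp add: le_fun_def)
      then show ?thesis using f x unfolding B_def by force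
    qed
    then show "f \<in> B \<beta>" using f by (simp add: B_def)
  qed
  show ?thesis unfolding has_bounded_resolution_def
    by (rule exI[of _ B]) (use bnd cov mono in blast)
qed

definition Cs :: "((nat\<Rightarrow>nat) \<Rightarrow> 'b set) \<Rightarrow> nat list \<Rightarrow> 'b set" where
  "Cs B s = (\<Union>\<beta>\<in>{\<beta>. \<forall>i<length s. \<beta> i = s ! i}. B \<beta>)"

definition pref :: "(nat\<Rightarrow>nat) \<Rightarrow> nat \<Rightarrow> nat list" where
  "pref \<alpha> n = map \<alpha> [0..<n]"

lemma Cs_pref: "f \<in> Cs B (pref \<alpha> n) \<longleftrightarrow> (\<exists>\<beta>. (\<forall>i<n. \<beta> i = \<alpha> i) \<and> f \<in> B \<beta>)"
  unfolding Cs_def pref_def by auto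

definition goodseq :: "'a topology \<Rightarrow> ((nat\<Rightarrow>nat) \<Rightarrow> ('a\<Rightarrow>real) set) \<Rightarrow> nat list \<Rightarrow> bool" where
  "goodseq X B s \<longleftrightarrow> (\<exists>g\<in>Cp_carrier X. \<exists>F. finite F \<and> F \<subseteq> topspace X \<and>
     (\<forall>g'\<in>Cp_carrier X. \<forall>F'. finite F' \<and> F \<subseteq> F' \<and> F' \<subseteq> topspace X \<and> (\<forall>x\<in>F. g' x = g x) \<longrightarrow>
        (\<exists>f\<in>Cs B s. \<forall>x\<in>F'. f x = g' x)))"

lemma good_branch:
  assumes P: "P_space X" and cov: "(\<Union>\<alpha>. B \<alpha>) = Cp_carrier X"
  shows "\<exists>\<alpha>. \<forall>n. goodseq X B (pref \<alpha> n)"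
proof -
  let ?C = "Cp_carrier X" and ?S = "topspace X"
  define sq :: "nat \<Rightarrow> nat list" where "sq = from_nat"
  define Q where "Q = (\<lambda>k (p::('a\<Rightarrow>real) \<times> 'a set) (q::('a\<Rightarrow>real) \<times> 'a set).
     fst q \<in> ?C \<and> finite (snd q) \<and> snd p \<subseteq> snd q \<and> snd q \<subseteq> ?S \<and> (\<forall>x\<in>snd p. fst q x = fst p x) \<and>
     \<not>(\<exists>f\<in>Cs B (sq k). \<forall>x\<in>snd q. f x = fst q x))"
  have Qex: "\<exists>q. Q k p q" if ng: "\<not> goodseq X B (sq k)" and p: "fst p \<in> ?C" "finite (snd p)" "snd p \<subseteq> ?S" for k p
  proof -
    have H: "\<not> (\<forall>g'\<in>?C. \<forall>F'. finite F' \<and> snd p \<subseteq> F' \<and> F' \<subseteq> ?S \<and> (\<forall>x\<in>snd p. g' x = fst p x) \<longrightarrow>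
        (\<exists>f\<in>Cs B (sq k). \<forall>x\<in>F'. f x = g' x))"
    proof
      assume a: "\<forall>g'\<in>?C. \<forall>F'. finite F' \<and> snd p \<subseteq> F' \<and> F' \<subseteq> ?S \<and> (\<forall>x\<in>snd p. g' x = fst p x) \<longrightarrow>
        (\<exists>f\<in>Cs B (sq k). \<forall>x\<in>F'. f x = g' x)"
      have "finite (snd p) \<and> snd p \<subseteq> ?S \<and> (\<forall>g'\<in>?C. \<forall>F'. finite F' \<and> snd p \<subseteq> F' \<and> F' \<subseteq> ?S \<and> (\<forall>x\<in>snd p. g' x = fst p x) \<longrightarrow>
        (\<exists>f\<in>Cs B (sq k). \<forall>x\<in>F'. f x = g' x))"
        using p(2,3) a by (intro conjI)
      then have "\<exists>F. finite F \<and> F \<subseteq> ?S \<and> (\<forall>g'\<in>?C. \<forall>F'. finite F' \<and> F \<subseteq> F' \<and> F' \<subseteq> ?S \<and> (\<forall>x\<in>F. g' x = fst p x) \<longrightarrow>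
        (\<exists>f\<in>Cs B (sq k). \<forall>x\<in>F'. f x = g' x))" by (rule exI)
      then have "goodseq X B (sq k)" unfolding goodseq_def by (rule bexI[OF _ p(1)])
      then show False using ng by contradiction
    qed
    then obtain g' F' where g': "g' \<in> ?C" "finite F'" "snd p \<subseteq> F'" "F' \<subseteq> ?S"
      "\<forall>x\<in>snd p. g' x = fst p x" "\<not>(\<exists>f\<in>Cs B (sq k). \<forall>x\<in>F'. f x = g' x)"
      by blast
    have "Q k p (g', F')" unfolding Q_def using g' by simp
    then show ?thesis by blast
  qed
  define st where "st = rec_nat (Cp_zero X, {}) (\<lambda>k p. if goodseq X B (sq k) then p else (SOME q. Q k p q))"
  have st0: "st 0 = (Cp_zero X, {})" by (simp add: st_def)
  have stS: "st (Suc k) = (if goodseq X B (sq k) then st k else (SOME q. Q k (st k) q))" for k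
    by (simp add: st_def)
  have inv: "fst (st k) \<in> ?C \<and> finite (snd (st k)) \<and> snd (st k) \<subseteq> ?S" for k
  proof (induction k)
    case 0 then show ?case using Cp_zero_in by (simp add: st0)
  next
    case (Suc k)
    show ?case
    proof (cases "goodseq X B (sq k)")
      case True then show ?thesis using Suc by (simp add: stS)
    next
      case False
      have "Q k (st k) (SOME q. Q k (st k) q)" using Qex[OF False] Suc by (meson someI_ex)
      then show ?thesis using False by (simp add: stS Q_def)
    qed
  qed
  have ext: "snd (st k) \<subseteq> snd (st (Suc k)) \<and> (\<forall>x\<in>snd (st k). fst (st (Suc k)) x = fst (st k) x)" for k
  proof (cases "goodseq X B (sq k)")
    case True then show ?thesis by (simp add: stS)
  next
    case False
    have "Q k (st k) (SOME q. Q k (st k) q)" using Qex[OF False] inv[of k] by (meson someI_ex)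
    then show ?thesis using False by (simp add: stS Q_def)
  qed
  have bad: "\<not>(\<exists>f\<in>Cs B (sq k). \<forall>x\<in>snd (st (Suc k)). f x = fst (st (Suc k)) x)"
    if ng: "\<not> goodseq X B (sq k)" for k
  proof -
    have "Q k (st k) (SOME q. Q k (st k) q)" using Qex[OF ng] inv[of k] by (meson someI_ex)
    then show ?thesis using ng by (simp add: stS Q_def)
  qed
  have chain: "snd (st k) \<subseteq> snd (st m) \<and> (\<forall>x\<in>snd (st k). fst (st m) x = fst (st k) x)" if km: "k \<le> m" for k m
    using km
  proof (induction m rule: dec_induct)
    case base then show ?case by simp
  next
    case (step n)
    then show ?case using ext[of n] by auto
  qed
  define D where "D = (\<Union>k. snd (st k))"
  have cD: "countable D" unfolding D_def using inv by (simp add: countable_finite)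
  have DS: "D \<subseteq> ?S" unfolding D_def using inv by blast
  define L where "L = (\<lambda>x. fst (st (LEAST k. x \<in> snd (st k))) x)"
  have Lk: "L x = fst (st k) x" if x: "x \<in> snd (st k)" for x k
  proof -
    define k0 where "k0 = (LEAST k. x \<in> snd (st k))"
    have "k0 \<le> k" unfolding k0_def by (rule Least_le) (rule x)
    moreover have "x \<in> snd (st k0)" unfolding k0_def by (rule LeastI) (rule x)
    ultimately have "fst (st k) x = fst (st k0) x" using chain by blast
    then show ?thesis by (simp add: L_def k0_def)
  qed
  obtain h where h: "h \<in> ?C" "\<forall>d\<in>D. h d = L d" using P_extend[OF P cD DS] by blast
  obtain \<alpha> where ha: "h \<in> B \<alpha>" using h(1) cov by blast
  have "goodseq X B (pref \<alpha> n)" for n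
  proof (rule ccontr)
    assume ng: "\<not> goodseq X B (pref \<alpha> n)"
    obtain k where k: "pref \<alpha> n = sq k" unfolding sq_def by (metis surj_from_nat surjD)
    have hC: "h \<in> Cs B (sq k)" using ha k[symmetric] Cs_pref by metis
    have "\<forall>x\<in>snd (st (Suc k)). h x = fst (st (Suc k)) x"
    proof
      fix x assume x: "x \<in> snd (st (Suc k))"
      then have "x \<in> D" unfolding D_def by blast
      then have "h x = L x" using h(2) by blast
      also have "\<dots> = fst (st (Suc k)) x" by (rule Lk[OF x])
      finally show "h x = fst (st (Suc k)) x" .
    qed
    then show False using bad[of k] ng k hC by auto
  qed
  then show ?thesis by blast
qed

lemma good_point:
  assumes P: "P_space X" and g: "goodseq X B s"
  shows "\<exists>F. finite F \<and> (\<forall>y\<in>topspace X. y \<notin> F \<longrightarrow> (\<forall>c::real. \<exists>f\<in>Cs B s. f y = c))"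
proof -
  let ?C = "Cp_carrier X" and ?S = "topspace X"
  from g obtain g0 F where g0: "g0 \<in> ?C" and F: "finite F" "F \<subseteq> ?S" and
    R: "\<forall>g'\<in>?C. \<forall>F'. finite F' \<and> F \<subseteq> F' \<and> F' \<subseteq> ?S \<and> (\<forall>x\<in>F. g' x = g0 x) \<longrightarrow>
        (\<exists>f\<in>Cs B s. \<forall>x\<in>F'. f x = g' x)"
    using g unfolding goodseq_def by (elim bexE exE conjE) (rule that)
  have "\<exists>f\<in>Cs B s. f y = c" if y: "y \<in> ?S" and yF: "y \<notin> F" for y and c :: real
  proof -
    have cr: "completely_regular_space X" and H: "Hausdorff_space X"
      using P unfolding P_space_def Tychonoff_space_def by auto
    have cF: "closedin X F" using F Hausdorff_imp_t1_space[OF H] t1_space_closedin_finite by blast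
    have pre: "closedin X F \<and> y \<in> topspace X - F" using cF y yF by blast
    from cr[unfolded completely_regular_space_def, rule_format, OF pre]
    obtain u where u0: "continuous_map X (top_of_set {0..1::real}) u \<and> u y = 0 \<and> u ` F \<subseteq> {1}"
      by (elim exE) (erule that)
    then have uc: "continuous_map X euclideanreal u" and uy: "u y = 0" and uF: "\<And>x. x \<in> F \<Longrightarrow> u x = 1"
      using continuous_map_in_subtopology by auto
    define g' where "g' = restrict (\<lambda>x. g0 x + (c - g0 y) * (1 - u x)) ?S"
    have g0c: "continuous_map X euclideanreal g0" using g0 by (simp add: Cp_carrier_def)
    have "continuous_map X euclideanreal (\<lambda>x. g0 x + (c - g0 y) * (1 - u x))"
      by (intro continuous_map_add continuous_map_real_mult_left continuous_map_diff g0c uc continuous_map_const[THEN iffD2]) simp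
    then have "continuous_map X euclideanreal g'"
      by (rule continuous_map_eq) (simp add: g'_def)
    then have g'C: "g' \<in> ?C" by (simp add: Cp_carrier_def g'_def)
    have agree: "\<forall>x\<in>F. g' x = g0 x" using F(2) uF by (auto simp: g'_def)
    have "finite (insert y F) \<and> F \<subseteq> insert y F \<and> insert y F \<subseteq> ?S \<and> (\<forall>x\<in>F. g' x = g0 x)"
      using F y agree by auto
    then have "\<exists>f\<in>Cs B s. \<forall>x\<in>insert y F. f x = g' x" by (rule R[rule_format, OF g'C])
    then obtain f where f: "f \<in> Cs B s" "\<forall>x\<in>insert y F. f x = g' x" by blast
    have "f y = g' y" using f(2) by blast
    also have "\<dots> = c" using y uy by (simp add: g'_def)
    finally show ?thesis using f(1) by blast
  qed
  then show ?thesis using F(1) by blast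
qed

lemma forward_countable:
  assumes P: "P_space X" and res: "has_bounded_resolution X"
  shows "countable (topspace X)"
proof -
  from res[unfolded has_bounded_resolution_def] obtain B :: "(nat\<Rightarrow>nat) \<Rightarrow> ('a\<Rightarrow>real) set" where
    B3: "(\<forall>\<alpha>. Cp_bounded X (B \<alpha>)) \<and> (\<Union>\<alpha>. B \<alpha>) = Cp_carrier X \<and> (\<forall>\<alpha> \<beta>. \<alpha> \<le> \<beta> \<longrightarrow> B \<alpha> \<subseteq> B \<beta>)" ..
  then have Bb: "\<forall>\<alpha>. Cp_bounded X (B \<alpha>)" and cov: "(\<Union>\<alpha>. B \<alpha>) = Cp_carrier X"
    and mono: "\<forall>\<alpha> \<beta>. \<alpha> \<le> \<beta> \<longrightarrow> B \<alpha> \<subseteq> B \<beta>" by auto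
  obtain \<alpha> where al: "\<forall>n. goodseq X B (pref \<alpha> n)" using good_branch[OF P cov] by blast
  have "\<forall>n. \<exists>F. finite F \<and> (\<forall>y\<in>topspace X. y \<notin> F \<longrightarrow> (\<forall>c::real. \<exists>f\<in>Cs B (pref \<alpha> n). f y = c))"
  proof
    fix n show "\<exists>F. finite F \<and> (\<forall>y\<in>topspace X. y \<notin> F \<longrightarrow> (\<forall>c::real. \<exists>f\<in>Cs B (pref \<alpha> n). f y = c))"
      by (rule good_point[OF P spec[OF al]])
  qed
  from choice[OF this] obtain FF where FF: "\<forall>n. finite (FF n) \<and> (\<forall>y\<in>topspace X. y \<notin> FF n \<longrightarrow> (\<forall>c::real. \<exists>f\<in>Cs B (pref \<alpha> n). f y = c))"
    by (elim exE) (erule that)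
  have sub: "topspace X \<subseteq> (\<Union>n. FF n)"
  proof
    fix y assume y: "y \<in> topspace X"
    show "y \<in> (\<Union>n. FF n)"
    proof (rule ccontr)
      assume "y \<notin> (\<Union>n. FF n)"
      then have yn: "\<And>n. y \<notin> FF n" by blast
      have "\<forall>n. \<exists>f. f \<in> Cs B (pref \<alpha> n) \<and> f y = real n"
      proof
        fix n
        from FF have "\<forall>y\<in>topspace X. y \<notin> FF n \<longrightarrow> (\<forall>c::real. \<exists>f\<in>Cs B (pref \<alpha> n). f y = c)" by blast
        then have "\<exists>f\<in>Cs B (pref \<alpha> n). f y = real n" using y yn by blast
        then show "\<exists>f. f \<in> Cs B (pref \<alpha> n) \<and> f y = real n" by blast
      qed
      from choice[OF this] obtain fn where fn: "\<forall>n. fn n \<in> Cs B (pref \<alpha> n) \<and> fn n y = real n"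
        by (elim exE) (erule that)
      have "\<forall>n. \<exists>\<beta>. (\<forall>i<n. \<beta> i = \<alpha> i) \<and> fn n \<in> B \<beta>"
      proof
        fix n
        have "fn n \<in> Cs B (pref \<alpha> n)" using fn by blast
        then show "\<exists>\<beta>. (\<forall>i<n. \<beta> i = \<alpha> i) \<and> fn n \<in> B \<beta>" by (simp only: Cs_pref)
      qed
      from choice[OF this] obtain bet where bet: "\<forall>n. (\<forall>i<n. bet n i = \<alpha> i) \<and> fn n \<in> B (bet n)"
        by (elim exE) (erule that)
      define \<gamma> where "\<gamma> = (\<lambda>i. Max (insert (\<alpha> i) ((\<lambda>j. bet j i) ` {..i})))"
      have le: "bet j \<le> \<gamma>" for j
      proof (rule le_funI)
        fix i
        have fin: "finite (insert (\<alpha> i) ((\<lambda>j. bet j i) ` {..i}))" by simp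
        show "bet j i \<le> \<gamma> i"
        proof (cases "j \<le> i")
          case True
          then have "bet j i \<in> insert (\<alpha> i) ((\<lambda>j. bet j i) ` {..i})" by simp
          then show ?thesis unfolding \<gamma>_def using fin by (rule Max_ge[rotated])
        next
          case False
          then have "bet j i = \<alpha> i" using bet by simp
          then have "bet j i \<in> insert (\<alpha> i) ((\<lambda>j. bet j i) ` {..i})" by simp
          then show ?thesis unfolding \<gamma>_def using fin by (rule Max_ge[rotated])
        qed
      qed
      have inB: "fn j \<in> B \<gamma>" for j
      proof -
        have "fn j \<in> B (bet j)" using bet by blast
        moreover have "B (bet j) \<subseteq> B \<gamma>" using mono le[of j] by blast
        ultimately show ?thesis by blast
      qed
      obtain M where M: "\<forall>f\<in>B \<gamma>. \<bar>f y\<bar> \<le> M" using Cp_bounded_pt[OF Bb[rule_format, of \<gamma>] y] by blast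
      define j where "j = Suc (nat \<lceil>M\<rceil>)"
      have "\<bar>fn j y\<bar> \<le> M" using M inB by blast
      moreover have "fn j y = real j" using fn by blast
      moreover have "real j > M" unfolding j_def using real_nat_ceiling_ge[of M] by simp
      ultimately show False by simp
    qed
  qed
  have "countable (\<Union>n. FF n)" using FF by (simp add: countable_finite)
  then show ?thesis using sub countable_subset by blast
qed

theorem proposition3p4:
  fixes X :: "'a topology"
  assumes "Lindelof_space X" and "P_space X"
  shows "has_bounded_resolution X \<longleftrightarrow>
           countable (topspace X) \<and> X = discrete_topology (topspace X)"
proof
  assume "has_bounded_resolution X"
  then have c: "countable (topspace X)" by (rule forward_countable[OF assms(2)])
  then show "countable (topspace X) \<and> X = discrete_topology (topspace X)"
    using P_countable_discrete[OF assms(2) c] by blast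
next
  assume "countable (topspace X) \<and> X = discrete_topology (topspace X)"
  then show "has_bounded_resolution X" using countable_resolution by blast
qed

end
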